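(* For any $n\in\mathbb{N}$, $(\mathcal{A}_n,L)$ is a biautomatic structure for $\mathrm{lps}_n$, where $L$ is the set of all words $\alpha^1\alpha^2\cdots\alpha^k$ ($k\geq0$) such that each $\alpha^i$ is a nonempty strictly decreasing word over $\mathcal{A}_n$ and, writing $\alpha^i_1$ for the last (smallest) letter of $\alpha^i$, $\alpha^1_1\leq\alpha^2_1\leq\cdots\leq\alpha^k_1$.
   Context: Let $\mathcal{A}_n=\{1<2<\cdots<n\}$. An lPS tableau is a finite (possibly empty) sequence of nonempty bottom-justified columns of boxes filled with positive integers, such that the entries of each column are strictly decreasing from top to bottom and the bottom entries of the columns form a weakly increasing sequence from left to right. Right insertion of a symbol $a$ into an lPS tableau $B$: if $a$ is greater than or equal to every entry of the bottom row, append a new column consisting of $a$ at the right end; otherwise, let $z$ be the leftmost bottom-row entry with $z>a$ and put $a$ in a new box at the bottom of the column of $z$ (the previous entries of that column move up one box). For $w=w_1\cdots w_k$, $\mathfrak{R}_\ell(w)$ is obtained by starting with the empty tableau and right-inserting $w_1,\dots,w_k$ in order. The monoid $\mathrm{lps}_n$ is the quotient of $\mathcal{A}_n^*$ by the congruence $u\equiv v\iff\mathfrak{R}_\ell(u)=\mathfrak{R}_\ell(v)$; words are identified with the elements they represent. For an alphabet $\Sigma$ and a padding symbol $\$\notin\Sigma$, $\delta_R:\Sigma^*\times\Sigma^*\to((\Sigma\cup\{\$\})\times(\Sigma\cup\{\$\}))^*$ sends $(u_1\cdots u_m,v_1\cdots v_p)$ to the word of pairs $(u_i,v_i)$ obtained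 after padding the shorter word on the right with $\$$'s to equal length; $\delta_L$ is the same with padding on the left. For a monoid $M$ generated by finite $\Sigma$ and a regular language $L\subseteq\Sigma^*$ mapping onto $M$, define $L_a=\{(u,v)\in L\times L: ua=_M v\}$ and ${}_aL=\{(u,v)\in L\times L: au=_M v\}$. $(\Sigma,L)$ is a biautomatic structure for $M$ if $(L_a)\delta_R$, $({}_aL)\delta_R$, $(L_a)\delta_L$ and $({}_aL)\delta_L$ are regular languages for every $a\in\Sigma\cup\{\varepsilon\}$. *)

theory Defs
  imports Main
begin

text \<open>An lPS tableau is a list of columns (left to right); each column is a list of
  entries listed from top to bottom, so the bottom entry of a column is its last element.\<close>

type_synonym tableau = "nat list list"

fun rinsert :: "nat \<Rightarrow> tableau \<Rightarrow> tableau" where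
  "rinsert a [] = [[a]]"
| "rinsert a (c # B) = (if a < last c then (c @ [a]) # B else c # rinsert a B)"

definition Rl :: "nat list \<Rightarrow> tableau" where
  "Rl w = foldl (\<lambda>B a. rinsert a B) [] w"

definition lps_eq :: "nat list \<Rightarrow> nat list \<Rightarrow> bool" where
  "lps_eq u v \<longleftrightarrow> Rl u = Rl v"

definition regular_over :: "'a set \<Rightarrow> 'a list set \<Rightarrow> bool" where
  "regular_over \<Gamma> L \<longleftrightarrow> L \<subseteq> lists \<Gamma> \<and>
     (\<exists>(Q::nat set) q0 (\<delta>::nat \<Rightarrow> 'a \<Rightarrow> nat) F.
        finite Q \<and> q0 \<in> Q \<and> (\<forall>q\<in>Q. \<forall>x\<in>\<Gamma>. \<delta> q x \<in> Q) \<and> F \<subseteq> Q \<and>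
        L = {w \<in> lists \<Gamma>. foldl \<delta> q0 w \<in> F})"

definition deltaR :: "'a list \<Rightarrow> 'a list \<Rightarrow> ('a option \<times> 'a option) list" where
  "deltaR u v = (let m = max (length u) (length v) in
     zip (map Some u @ replicate (m - length u) None) (map Some v @ replicate (m - length v) None))"

definition deltaL :: "'a list \<Rightarrow> 'a list \<Rightarrow> ('a option \<times> 'a option) list" where
  "deltaL u v = (let m = max (length u) (length v) in
     zip (replicate (m - length u) None @ map Some u) (replicate (m - length v) None @ map Some v))"

definition pad_alphabet :: "'a set \<Rightarrow> ('a option \<times> 'a option) set" where
  "pad_alphabet \<Sigma> = insert None (Some ` \<Sigma>) \<times> insert None (Some ` \<Sigma>)"

text \<open>The monoid is presented as the quotient of \<Sigma>* by the congruence eqv.\<close>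

definition Lright :: "('a list \<Rightarrow> 'a list \<Rightarrow> bool) \<Rightarrow> 'a list set \<Rightarrow> 'a list \<Rightarrow> ('a list \<times> 'a list) set" where
  "Lright eqv L a = {(u, v). u \<in> L \<and> v \<in> L \<and> eqv (u @ a) v}"

definition Lleft :: "('a list \<Rightarrow> 'a list \<Rightarrow> bool) \<Rightarrow> 'a list set \<Rightarrow> 'a list \<Rightarrow> ('a list \<times> 'a list) set" where
  "Lleft eqv L a = {(u, v). u \<in> L \<and> v \<in> L \<and> eqv (a @ u) v}"

definition biautomatic_structure ::
  "'a set \<Rightarrow> ('a list \<Rightarrow> 'a list \<Rightarrow> bool) \<Rightarrow> 'a list set \<Rightarrow> bool" where
  "biautomatic_structure \<Sigma> eqv L \<longleftrightarrow>
     finite \<Sigma> \<and> regular_over \<Sigma> L \<and> (\<forall>w \<in> lists \<Sigma>. \<exists>u \<in> L. eqv w u) \<and>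
     (\<forall>a \<in> insert [] ((\<lambda>x. [x]) ` \<Sigma>).
        regular_over (pad_alphabet \<Sigma>) ((\<lambda>(u, v). deltaR u v) ` Lright eqv L a) \<and>
        regular_over (pad_alphabet \<Sigma>) ((\<lambda>(u, v). deltaR u v) ` Lleft eqv L a) \<and>
        regular_over (pad_alphabet \<Sigma>) ((\<lambda>(u, v). deltaL u v) ` Lright eqv L a) \<and>
        regular_over (pad_alphabet \<Sigma>) ((\<lambda>(u, v). deltaL u v) ` Lleft eqv L a))"

definition lpsL :: "nat \<Rightarrow> nat list set" where
  "lpsL n = {concat xs | xs.
     (\<forall>\<alpha> \<in> set xs. \<alpha> \<noteq> [] \<and> sorted_wrt (>) \<alpha> \<and> set \<alpha> \<subseteq> {1..n}) \<and> sorted (map last xs)}"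

end

theory Submission
  imports Defs
begin

definition quot :: "'a list \<Rightarrow> 'a list set \<Rightarrow> 'a list set" where
  "quot z K = {w. z @ w \<in> K}"

lemma quot_snoc: "quot [a] (quot z K) = quot (z @ [a]) K"
  by (simp add: quot_def)

lemma MN_regular:
  assumes sub: "K \<subseteq> lists \<Gamma>" and fin: "finite ((\<lambda>z. quot z K) ` lists \<Gamma>)"
  shows "regular_over \<Gamma> K"
proof -
  define Qs where "Qs = (\<lambda>z. quot z K) ` lists \<Gamma>"
  obtain h where h: "bij_betw h Qs {0..<card Qs}"
    using ex_bij_betw_finite_nat fin Qs_def by blast
  define g where "g = inv_into Qs h"
  have inj: "inj_on h Qs" using h bij_betw_def by blast
  have hQ: "\<And>X. X \<in> Qs \<Longrightarrow> h X \<in> {0..<card Qs}" using h bij_betwE by blast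
  have gh: "\<And>X. X \<in> Qs \<Longrightarrow> g (h X) = X" using inj g_def by simp
  have gQ: "\<And>q. q \<in> {0..<card Qs} \<Longrightarrow> g q \<in> Qs"
    using h g_def by (metis bij_betw_def inv_into_into)
  define \<delta> where "\<delta> q a = h (quot [a] (g q))" for q a
  define F where "F = h ` {X\<in>Qs. [] \<in> X}"
  have inQs: "\<And>z. z \<in> lists \<Gamma> \<Longrightarrow> quot z K \<in> Qs" using Qs_def by blast
  have fold: "\<And>z. z \<in> lists \<Gamma> \<Longrightarrow> foldl \<delta> (h (quot z K)) w = h (quot (z @ w) K)"
    if "w \<in> lists \<Gamma>" for w
    using that
  proof (induction w)
    case Nil then show ?case by simp
  next
    case (Cons a w)
    have "\<delta> (h (quot z K)) a = h (quot (z @ [a]) K)"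
      using Cons.prems gh inQs by (simp add: \<delta>_def quot_snoc)
    then show ?case using Cons by simp
  qed
  have q0: "h K \<in> {0..<card Qs}" using hQ inQs[of "[]"] by (simp add: quot_def)
  have K0: "quot [] K = K" by (simp add: quot_def)
  have A: "\<forall>q\<in>{0..<card Qs}. \<forall>x\<in>\<Gamma>. \<delta> q x \<in> {0..<card Qs}"
    proof (intro ballI)
      fix q x assume q: "q \<in> {0..<card Qs}" and x: "x \<in> \<Gamma>"
      from gQ[OF q] obtain z where z: "z \<in> lists \<Gamma>" "g q = quot z K" using Qs_def by blast
      have "\<delta> q x = h (quot (z @ [x]) K)" using z by (simp add: \<delta>_def quot_snoc)
      moreover have "z @ [x] \<in> lists \<Gamma>" using z x by simp
      ultimately show "\<delta> q x \<in> {0..<card Qs}" using hQ inQs by simp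
    qed
    have B: "F \<subseteq> {0..<card Qs}" using hQ F_def by blast
    have C: "K = {w \<in> lists \<Gamma>. foldl \<delta> (h K) w \<in> F}"
    proof (intro set_eqI iffI)
      fix w assume w: "w \<in> K"
      then have wl: "w \<in> lists \<Gamma>" using sub by blast
      have "foldl \<delta> (h K) w = h (quot w K)" using fold[of w "[]"] wl K0 by simp
      moreover have "[] \<in> quot w K" using w by (simp add: quot_def)
      ultimately show "w \<in> {w \<in> lists \<Gamma>. foldl \<delta> (h K) w \<in> F}"
        using wl inQs F_def by auto
    next
      fix w assume "w \<in> {w \<in> lists \<Gamma>. foldl \<delta> (h K) w \<in> F}"
      then have wl: "w \<in> lists \<Gamma>" and inF: "foldl \<delta> (h K) w \<in> F" by auto
      have "foldl \<delta> (h K) w = h (quot w K)" using fold[of w "[]"] wl K0 by simp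
      then obtain X where X: "X \<in> Qs" "[] \<in> X" "h X = h (quot w K)" using inF F_def by auto
      then have "X = quot w K" using inj inQs[OF wl] by (meson inj_on_def)
      then show "w \<in> K" using X by (simp add: quot_def)
    qed
  show ?thesis unfolding regular_over_def
    apply (rule conjI[OF sub])
    apply (rule exI[of _ "{0..<card Qs}"], rule exI[of _ "h K"], rule exI[of _ \<delta>], rule exI[of _ F])
    using A B C q0 by (intro conjI finite_atLeastLessThan)
qed

inductive reach :: "('s \<Rightarrow> 'a list \<Rightarrow> 's \<Rightarrow> bool) \<Rightarrow> 's \<Rightarrow> 'a list \<Rightarrow> 's \<Rightarrow> bool"
  for T where
  reach_nil: "reach T s [] s"
| reach_step: "T s b s' \<Longrightarrow> reach T s' w t \<Longrightarrow> reach T s (b @ w) t"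

lemma reach_trans: "reach T s x m \<Longrightarrow> reach T m y t \<Longrightarrow> reach T s (x @ y) t"
  by (induction rule: reach.induct) (auto intro: reach_step)

definition Rc where
  "Rc T s1 p w t \<longleftrightarrow> (p = [] \<and> reach T s1 w t) \<or>
     (\<exists>b2 s' w'. T s1 (p @ b2) s' \<and> w = b2 @ w' \<and> reach T s' w' t)"

lemma reach_decomp:
  assumes "reach T s x t" "x = z @ w"
  shows "\<exists>z1 p s1. z = z1 @ p \<and> reach T s z1 s1 \<and> Rc T s1 p w t \<and>
     (p \<noteq> [] \<longrightarrow> (\<exists>b2 s'. T s1 (p @ b2) s'))"
  using assms
proof (induction arbitrary: z rule: reach.induct)
  case (reach_nil s)
  then show ?case by (intro exI[of _ "[]"]) (auto simp: Rc_def intro: reach.intros)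
next
  case (reach_step s b s' w' t)
  show ?case
  proof (cases "length b \<le> length z")
    case True
    then obtain z' where z': "z = b @ z'" "w' = z' @ w"
      using reach_step.prems by (metis append_eq_append_conv_if append_take_drop_id)
    from reach_step.IH[OF z'(2)] obtain z1 p s1 where
      "z' = z1 @ p" "reach T s' z1 s1" "Rc T s1 p w t" "p \<noteq> [] \<longrightarrow> (\<exists>b2 s'. T s1 (p @ b2) s')"
      by blast
    then show ?thesis using z' reach_step.hyps(1)
      by (intro exI[of _ "b @ z1"] exI[of _ p] exI[of _ s1]) (auto intro: reach.intros)
  next
    case False
    then obtain b2 where b2: "b = z @ b2" "w = b2 @ w'"
      using reach_step.prems by (metis append_eq_append_conv2 append_eq_append_conv_if 
          le_cases append_take_drop_id length_append le_add1 nat_le_linear not_le)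
    show ?thesis
    proof (cases "z = []")
      case True
      then show ?thesis using reach_step b2
        by (intro exI[of _ "[]"] exI[of _ "[]"] exI[of _ s]) (auto simp: Rc_def intro: reach.intros)
    next
      case False
      then show ?thesis using reach_step b2
        by (intro exI[of _ "[]"] exI[of _ z] exI[of _ s]) (auto simp: Rc_def intro: reach.intros)
    qed
  qed
qed

lemma reach_S:
  assumes "reach T s w t" "s \<in> S"
    "\<forall>s b s'. s \<in> S \<longrightarrow> T s b s' \<longrightarrow> s' \<in> S \<and> length b \<le> N \<and> set b \<subseteq> \<Gamma>"
  shows "t \<in> S \<and> set w \<subseteq> \<Gamma>"
  using assms(1,2) by (induction rule: reach.induct) (use assms(3) in fastforce)+

lemma block_regular:
  assumes finS: "finite S" and fin\<Gamma>: "finite \<Gamma>" and s0: "s0 \<in> S"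
    and bnd: "\<And>s b s'. s \<in> S \<Longrightarrow> T s b s' \<Longrightarrow> s' \<in> S \<and> length b \<le> N \<and> set b \<subseteq> \<Gamma>"
  shows "regular_over \<Gamma> {w. reach T s0 w t0}"
proof (rule MN_regular)
  have bnd': "\<forall>s b s'. s \<in> S \<longrightarrow> T s b s' \<longrightarrow> s' \<in> S \<and> length b \<le> N \<and> set b \<subseteq> \<Gamma>"
    using bnd by blast
  show "{w. reach T s0 w t0} \<subseteq> lists \<Gamma>"
  proof
    fix w assume "w \<in> {w. reach T s0 w t0}"
    then have "reach T s0 w t0" by simp
    from reach_S[OF this s0 bnd'] show "w \<in> lists \<Gamma>" by auto
  qed
  define P where "P = S \<times> {p. set p \<subseteq> \<Gamma> \<and> length p \<le> N}"
  have finP: "finite P" unfolding P_def using finS finite_lists_length_le[OF fin\<Gamma>] by blast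
  define C where "C z = {(s1, p). s1 \<in> S \<and> set p \<subseteq> \<Gamma> \<and> length p \<le> N \<and>
     (\<exists>z1. z = z1 @ p \<and> reach T s0 z1 s1)}" for z
  define \<Phi> where "\<Phi> X = {w. \<exists>(s1, p)\<in>X. Rc T s1 p w t0}" for X
  have eq: "quot z {w. reach T s0 w t0} = \<Phi> (C z)" for z
  proof (intro set_eqI iffI)
    fix w assume "w \<in> quot z {w. reach T s0 w t0}"
    then have r: "reach T s0 (z @ w) t0" by (simp add: quot_def)
    from reach_decomp[OF r refl] obtain z1 p s1 where
      d: "z = z1 @ p" "reach T s0 z1 s1" "Rc T s1 p w t0" "p \<noteq> [] \<longrightarrow> (\<exists>b2 s'. T s1 (p @ b2) s')"
      by blast
    have s1: "s1 \<in> S" using reach_S[OF d(2) s0 bnd'] by blast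
    have "set p \<subseteq> \<Gamma> \<and> length p \<le> N"
    proof (cases "p = []")
      case False
      then obtain b2 s' where "T s1 (p @ b2) s'" using d(4) by blast
      then show ?thesis using bnd[OF s1] by fastforce
    qed simp
    then show "w \<in> \<Phi> (C z)" using d s1 unfolding \<Phi>_def C_def by blast
  next
    fix w assume "w \<in> \<Phi> (C z)"
    then obtain s1 p z1 where d: "z = z1 @ p" "reach T s0 z1 s1" "Rc T s1 p w t0"
      unfolding \<Phi>_def C_def by blast
    have "reach T s1 (p @ w) t0"
      using d(3) unfolding Rc_def
      by (auto intro: reach.intros) (metis append.assoc reach_step)
    then have "reach T s0 (z1 @ p @ w) t0" using reach_trans[OF d(2)] by blast
    then show "w \<in> quot z {w. reach T s0 w t0}" using d(1) by (simp add: quot_def)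
  qed
  have "(\<lambda>z. quot z {w. reach T s0 w t0}) ` lists \<Gamma> \<subseteq> \<Phi> ` Pow P"
    using eq unfolding C_def P_def by auto
  then show "finite ((\<lambda>z. quot z {w. reach T s0 w t0}) ` lists \<Gamma>)"
    using finP by (meson finite_Pow_iff finite_imageI finite_subset)
qed



definition Ins :: "tableau \<Rightarrow> nat list \<Rightarrow> tableau" where
  "Ins T w = foldl (\<lambda>B a. rinsert a B) T w"

lemma Ins_simps[simp]: "Ins T [] = T" "Ins T (a # w) = Ins (rinsert a T) w"
  "Ins T (u @ v) = Ins (Ins T u) v"
  by (simp_all add: Ins_def)

lemma Rl_Ins: "Rl w = Ins [] w" by (simp add: Rl_def Ins_def)

definition col :: "nat \<Rightarrow> nat list \<Rightarrow> bool" where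
  "col n C \<longleftrightarrow> C \<noteq> [] \<and> sorted_wrt (>) C \<and> set C \<subseteq> {1..n}"

fun VF :: "nat \<Rightarrow> nat \<Rightarrow> nat list list \<Rightarrow> bool" where
  "VF n b [] = True"
| "VF n b (C # Cs) = (col n C \<and> b \<le> last C \<and> VF n (last C) Cs)"

definition validT :: "nat \<Rightarrow> tableau \<Rightarrow> bool" where
  "validT n T \<longleftrightarrow> (\<forall>C\<in>set T. col n C) \<and> sorted (map last T)"

lemma last_le: "sorted_wrt (>) (C::nat list) \<Longrightarrow> y \<in> set C \<Longrightarrow> last C \<le> y"
proof (induction C)
  case (Cons a C)
  show ?case
  proof (cases "C = []")
    case True then show ?thesis using Cons.prems by simp
  next
    case False
    then have la: "last C < a" using Cons.prems(1) last_in_set by auto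
    have "y = a \<or> y \<in> set C" using Cons.prems(2) by simp
    then show ?thesis
    proof
      assume "y = a" then show ?thesis using la False by simp
    next
      assume "y \<in> set C" then show ?thesis using Cons.IH Cons.prems(1) False by simp
    qed
  qed
qed simp

lemma VF_iff: "VF n b T \<longleftrightarrow> validT n T \<and> (\<forall>C\<in>set T. b \<le> last C)"
  by (induction T arbitrary: b) (auto simp: validT_def)

lemma VF_mono: "VF n b T \<Longrightarrow> b' \<le> b \<Longrightarrow> VF n b' T"
  by (cases T) auto

lemma rinsert_skip: "(\<forall>c\<in>set T0. \<not> a < last c) \<Longrightarrow> rinsert a (T0 @ T1) = T0 @ rinsert a T1"
  by (induction T0) auto

lemma Ins_skip: "(\<forall>c\<in>set T0. \<forall>a\<in>set w. \<not> a < last c) \<Longrightarrow> Ins (T0 @ T1) w = T0 @ Ins T1 w"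
  by (induction w arbitrary: T1) (auto simp: rinsert_skip)

lemma B1: "P \<noteq> [] \<Longrightarrow> sorted_wrt (>) C \<Longrightarrow> \<forall>y\<in>set C. y < last P \<Longrightarrow> Ins [P] C = [P @ C]"
  by (induction C arbitrary: P) auto

lemma B2: "P \<noteq> [] \<Longrightarrow> Q \<noteq> [] \<Longrightarrow> sorted_wrt (>) C \<Longrightarrow> \<forall>y\<in>set C. y < last Q \<Longrightarrow>
  Ins [P, Q] C = [P @ filter (\<lambda>y. y < last P) C, Q @ filter (\<lambda>y. last P \<le> y) C]"
proof (induction C arbitrary: P Q)
  case Nil then show ?case by simp
next
  case (Cons y C)
  show ?case
  proof (cases "y < last P")
    case True
    have r: "rinsert y [P, Q] = [P @ [y], Q]" using True by simp
    have "Ins [P @ [y], Q] C = [P @ [y] @ filter (\<lambda>z. z < y) C, Q @ filter (\<lambda>z. y \<le> z) C]"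
      using Cons by simp
    moreover have "filter (\<lambda>z. z < y) C = C" "filter (\<lambda>z. y \<le> z) C = []"
      using Cons.prems(3) by (auto simp: filter_id_conv filter_empty_conv)
    moreover have "filter (\<lambda>z. z < last P) C = C" "filter (\<lambda>z. last P \<le> z) C = []"
      using Cons.prems(3) True by (auto simp: filter_id_conv filter_empty_conv)
    ultimately show ?thesis using r True by simp
  next
    case False
    have r: "rinsert y [P, Q] = [P, Q @ [y]]" using False Cons.prems(4) by simp
    have "Ins [P, Q @ [y]] C = [P @ filter (\<lambda>z. z < last P) C, Q @ [y] @ filter (\<lambda>z. last P \<le> z) C]"
      using Cons by simp
    then show ?thesis using r False by simp
  qed
qed

lemma B: "P \<noteq> [] \<Longrightarrow> sorted_wrt (>) C \<Longrightarrow>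
  Ins [P] C = [P @ filter (\<lambda>y. y < last P) C] @
     (if filter (\<lambda>y. last P \<le> y) C = [] then [] else [filter (\<lambda>y. last P \<le> y) C])"
proof (cases C)
  case Nil then show ?thesis by simp
next
  case (Cons y C')
  assume P: "P \<noteq> []" and s: "sorted_wrt (>) C"
  show ?thesis
  proof (cases "y < last P")
    case True
    have "\<forall>z\<in>set C. z < last P" using s True Cons by auto
    then show ?thesis using B1[OF P s] by (auto simp: filter_id_conv filter_empty_conv)
  next
    case False
    have "Ins [P] C = Ins [P, [y]] C'" using False Cons by simp
    also have "\<dots> = [P @ filter (\<lambda>z. z < last P) C', [y] @ filter (\<lambda>z. last P \<le> z) C']"
      using B2[OF P, of "[y]" C'] s Cons by simp
    finally show ?thesis using False Cons by simp
  qed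
qed

lemma split_dec: "sorted_wrt (>) (C::nat list) \<Longrightarrow> C = filter (\<lambda>y. p \<le> y) C @ filter (\<lambda>y. y < p) C"
proof (induction C)
  case (Cons c C)
  show ?case
  proof (cases "c < p")
    case True
    then have "\<forall>y\<in>set C. y < p" using Cons.prems by (force intro: less_trans)
    then show ?thesis using True by (auto simp: filter_id_conv filter_empty_conv)
  next
    case False then show ?thesis using Cons by auto
  qed
qed simp

lemma Ins_col: "col n C \<Longrightarrow> (\<forall>c\<in>set T. last c \<le> last C) \<Longrightarrow> Ins T C = T @ [C]"
proof -
  assume c: "col n C" and b: "\<forall>c\<in>set T. last c \<le> last C"
  then obtain y C' where C: "C = y # C'" unfolding col_def by (cases C) auto
  have "Ins T C = T @ Ins [] C"
    using Ins_skip[of T C "[]"] b c last_le[of C] unfolding col_def by fastforce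
  moreover have "Ins [] C = [C]" using B1[of "[y]" C'] c C unfolding col_def by simp
  ultimately show ?thesis by simp
qed

lemma F1gen: "VF n b Cs \<Longrightarrow> (\<forall>c\<in>set T. last c \<le> b) \<Longrightarrow> Ins T (concat Cs) = T @ Cs"
proof (induction Cs arbitrary: T b)
  case (Cons C Cs)
  have "Ins T C = T @ [C]" using Cons.prems Ins_col[of n C T] by force
  moreover have "VF n (last C) Cs" using Cons.prems by simp
  moreover have "\<forall>c\<in>set (T @ [C]). last c \<le> last C" using Cons.prems by auto
  ultimately show ?case using Cons.IH by simp
qed simp

lemma Rl_concat: "VF n 0 Cs \<Longrightarrow> Rl (concat Cs) = Cs"
  using F1gen[of n 0 Cs "[]"] by (simp add: Rl_Ins)

fun Gt :: "nat list \<Rightarrow> nat list list \<Rightarrow> nat list list" where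
  "Gt P [] = [P]"
| "Gt P (C # Cs) = (P @ filter (\<lambda>y. y < last P) C) #
     (if filter (\<lambda>y. last P \<le> y) C = [] then Cs else Gt (filter (\<lambda>y. last P \<le> y) C) Cs)"

lemma MainIns: "P \<noteq> [] \<Longrightarrow> VF n b Cs \<Longrightarrow> (\<forall>c\<in>set T0. last c \<le> b) \<Longrightarrow>
  Ins (T0 @ [P]) (concat Cs) = T0 @ Gt P Cs"
proof (induction Cs arbitrary: T0 P b)
  case Nil then show ?case by simp
next
  case (Cons C Cs)
  define S where "S = filter (\<lambda>y. y < last P) C"
  define Q where "Q = filter (\<lambda>y. last P \<le> y) C"
  have c: "col n C" "b \<le> last C" "VF n (last C) Cs" using Cons.prems by auto
  have dec: "sorted_wrt (>) C" "C \<noteq> []" using c unfolding col_def by auto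
  have sp: "C = Q @ S" using split_dec[OF dec(1), of "last P"] S_def Q_def by simp
  have "Ins (T0 @ [P]) C = T0 @ Ins [P] C"
    using Ins_skip[of T0 C "[P]"] Cons.prems(3) c(2) last_le[OF dec(1)] by fastforce
  also have "\<dots> = T0 @ [P @ S] @ (if Q = [] then [] else [Q])"
    using B[OF Cons.prems(1) dec(1)] S_def Q_def by simp
  finally have i1: "Ins (T0 @ [P]) C = T0 @ [P @ S] @ (if Q = [] then [] else [Q])" .
  have lPS: "last (P @ S) \<le> last C"
  proof (cases "S = []")
    case True
    then have "Q = C" using sp by simp
    then have "last C \<in> set Q" using dec by simp
    then show ?thesis using True Q_def by simp
  next
    case False
    then show ?thesis using sp by simp
  qed
  have b0: "\<forall>c\<in>set (T0 @ [P @ S]). last c \<le> last C" using Cons.prems(3) c(2) lPS by auto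
  show ?case
  proof (cases "Q = []")
    case True
    have "Ins (T0 @ [P]) (concat (C # Cs)) = Ins (T0 @ [P @ S]) (concat Cs)" using i1 True by simp
    also have "\<dots> = T0 @ [P @ S] @ Cs" using F1gen[OF c(3) b0] by simp
    finally show ?thesis using True S_def Q_def by simp
  next
    case False
    have "Ins (T0 @ [P]) (concat (C # Cs)) = Ins ((T0 @ [P @ S]) @ [Q]) (concat Cs)" using i1 False by simp
    also have "\<dots> = (T0 @ [P @ S]) @ Gt Q Cs" using Cons.IH[OF False c(3) b0] .
    finally show ?thesis using False S_def Q_def by simp
  qed
qed

definition rot :: "nat \<Rightarrow> nat list \<Rightarrow> nat list" where
  "rot t C = filter (\<lambda>y. y < t) C @ filter (\<lambda>y. t \<le> y) C"

definition nt :: "nat \<Rightarrow> nat \<Rightarrow> nat list \<Rightarrow> nat" where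
  "nt n t C = (if filter (\<lambda>y. t \<le> y) C = [] then Suc n else last (filter (\<lambda>y. t \<le> y) C))"

fun rots :: "nat \<Rightarrow> nat \<Rightarrow> nat list list \<Rightarrow> nat list list" where
  "rots n t [] = []"
| "rots n t (C # Cs) = rot t C # rots n (nt n t C) Cs"

lemma rots_top: "VF n b Cs \<Longrightarrow> rots n (Suc n) Cs = Cs"
proof (induction Cs arbitrary: b)
  case (Cons C Cs)
  have "set C \<subseteq> {1..n}" using Cons.prems by (simp add: col_def)
  then have "filter (\<lambda>y. y < Suc n) C = C" "filter (\<lambda>y. Suc n \<le> y) C = []"
    by (auto simp: filter_id_conv filter_empty_conv)
  then show ?case using Cons by (auto simp: rot_def nt_def)
qed simp

lemma concat_Gt: "P \<noteq> [] \<Longrightarrow> VF n b Cs \<Longrightarrow> concat (Gt P Cs) = P @ concat (rots n (last P) Cs)"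
proof (induction Cs arbitrary: P b)
  case (Cons C Cs)
  show ?case
  proof (cases "filter (\<lambda>y. last P \<le> y) C = []")
    case True
    then show ?thesis using Cons.prems rots_top[of n "last C" Cs] by (simp add: rot_def nt_def)
  next
    case False
    then show ?thesis using Cons.prems Cons.IH[OF False, of "last C"] by (simp add: rot_def nt_def)
  qed
qed simp

lemma Rl_cons: "VF n 0 Cs \<Longrightarrow> concat (Rl (x # concat Cs)) = x # concat (rots n x Cs)"
proof -
  assume v: "VF n 0 Cs"
  have "Rl (x # concat Cs) = Ins ([] @ [[x]]) (concat Cs)" by (simp add: Rl_Ins)
  also have "\<dots> = Gt [x] Cs" using MainIns[of "[x]" n 0 Cs "[]"] v by simp
  finally show ?thesis using concat_Gt[of "[x]" n 0 Cs] v by simp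
qed

lemma Rl_snoc: "Rl (u @ [x]) = rinsert x (Rl u)" by (simp add: Rl_def)

lemma lasts_rinsert: "set (map last (rinsert a T)) \<subseteq> insert a (set (map last T))"
  by (induction T) auto

lemma validT_rinsert: "validT n T \<Longrightarrow> a \<in> {1..n} \<Longrightarrow> validT n (rinsert a T)"
proof (induction T)
  case Nil then show ?case by (simp add: validT_def col_def)
next
  case (Cons c B)
  show ?case
  proof (cases "a < last c")
    case True
    have cc: "col n c" using Cons.prems by (simp add: validT_def)
    then have "col n (c @ [a])" using True Cons.prems(2) last_le[of c]
      by (auto simp: col_def sorted_wrt_append) (meson less_le_trans)
    then show ?thesis using Cons.prems True by (auto simp: validT_def)
  next
    case False
    have "validT n (rinsert a B)" using Cons by (simp add: validT_def)
    moreover have "\<forall>y\<in>set (map last (rinsert a B)). last c \<le> y"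
      using lasts_rinsert[of a B] Cons.prems False by (fastforce simp: validT_def)
    ultimately show ?thesis using Cons.prems False by (auto simp: validT_def)
  qed
qed

lemma validT_Rl: "set w \<subseteq> {1..n} \<Longrightarrow> validT n (Rl w)"
proof -
  have "validT n T \<Longrightarrow> set w \<subseteq> {1..n} \<Longrightarrow> validT n (Ins T w)" for T
  proof (induction w arbitrary: T)
    case (Cons a w)
    then have "validT n (rinsert a T)" using validT_rinsert by simp
    then show ?case using Cons by simp
  qed simp
  moreover have "validT n []" by (simp add: validT_def)
  ultimately show "set w \<subseteq> {1..n} \<Longrightarrow> validT n (Rl w)" by (simp add: Rl_Ins)
qed

lemma lpsL_eq: "lpsL n = {concat Cs | Cs. VF n 0 Cs}"
  unfolding lpsL_def VF_iff validT_def col_def by auto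

lemma VF_letters: "VF n b Cs \<Longrightarrow> set (concat Cs) \<subseteq> {1..n}"
  by (induction Cs arbitrary: b) (auto simp: col_def)

lemma key: "set w \<subseteq> {1..n} \<Longrightarrow> v \<in> lpsL n \<Longrightarrow> (lps_eq w v \<longleftrightarrow> v = concat (Rl w))"
proof -
  assume w: "set w \<subseteq> {1..n}" and v: "v \<in> lpsL n"
  then obtain Ds where D: "VF n 0 Ds" "v = concat Ds" using lpsL_eq by blast
  have RR: "Rl (concat (Rl w)) = Rl w" using Rl_concat[of n "Rl w"] validT_Rl[OF w] VF_iff by blast
  show ?thesis
  proof
    assume "lps_eq w v"
    then have "Rl w = Ds" using Rl_concat[OF D(1)] D(2) by (simp add: lps_eq_def)
    then show "v = concat (Rl w)" using D(2) by simp
  next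
    assume "v = concat (Rl w)"
    then show "lps_eq w v" using RR by (simp add: lps_eq_def)
  qed
qed

lemma concat_Rl_in: "set w \<subseteq> {1..n} \<Longrightarrow> concat (Rl w) \<in> lpsL n"
  using validT_Rl[of w n] VF_iff[of n 0] lpsL_eq by auto

lemma Lright_eq: "x \<in> {1..n} \<Longrightarrow>
  Lright lps_eq (lpsL n) [x] = {(concat Cs, concat (rinsert x Cs)) | Cs. VF n 0 Cs}"
proof -
  assume x: "x \<in> {1..n}"
  have "(u, v) \<in> Lright lps_eq (lpsL n) [x] \<longleftrightarrow> (\<exists>Cs. VF n 0 Cs \<and> u = concat Cs \<and> v = concat (rinsert x Cs))"
    for u v
  proof
    assume "(u, v) \<in> Lright lps_eq (lpsL n) [x]"
    then have uv: "u \<in> lpsL n" "v \<in> lpsL n" "lps_eq (u @ [x]) v" by (auto simp: Lright_def)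
    then obtain Cs where C: "VF n 0 Cs" "u = concat Cs" using lpsL_eq by blast
    have "set (u @ [x]) \<subseteq> {1..n}" using VF_letters[OF C(1)] C x by auto
    then have "v = concat (Rl (u @ [x]))" using key uv by blast
    then show "\<exists>Cs. VF n 0 Cs \<and> u = concat Cs \<and> v = concat (rinsert x Cs)"
      using C Rl_snoc Rl_concat by metis
  next
    assume "\<exists>Cs. VF n 0 Cs \<and> u = concat Cs \<and> v = concat (rinsert x Cs)"
    then obtain Cs where C: "VF n 0 Cs" "u = concat Cs" "v = concat (rinsert x Cs)" by blast
    have ws: "set (u @ [x]) \<subseteq> {1..n}" using VF_letters[OF C(1)] C x by auto
    have vv: "v = concat (Rl (u @ [x]))" using C Rl_snoc Rl_concat by metis
    show "(u, v) \<in> Lright lps_eq (lpsL n) [x]"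
      using key[OF ws] concat_Rl_in[OF ws] vv C lpsL_eq by (auto simp: Lright_def)
  qed
  then show ?thesis by auto
qed

lemma Lleft_eq: "x \<in> {1..n} \<Longrightarrow>
  Lleft lps_eq (lpsL n) [x] = {(concat Cs, x # concat (rots n x Cs)) | Cs. VF n 0 Cs}"
proof -
  assume x: "x \<in> {1..n}"
  have "(u, v) \<in> Lleft lps_eq (lpsL n) [x] \<longleftrightarrow> (\<exists>Cs. VF n 0 Cs \<and> u = concat Cs \<and> v = x # concat (rots n x Cs))"
    for u v
  proof
    assume "(u, v) \<in> Lleft lps_eq (lpsL n) [x]"
    then have uv: "u \<in> lpsL n" "v \<in> lpsL n" "lps_eq ([x] @ u) v" by (auto simp: Lleft_def)
    then obtain Cs where C: "VF n 0 Cs" "u = concat Cs" using lpsL_eq by blast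
    have "set ([x] @ u) \<subseteq> {1..n}" using VF_letters[OF C(1)] C x by auto
    then have "v = concat (Rl ([x] @ u))" using key uv by blast
    then show "\<exists>Cs. VF n 0 Cs \<and> u = concat Cs \<and> v = x # concat (rots n x Cs)"
      using C Rl_cons by auto
  next
    assume "\<exists>Cs. VF n 0 Cs \<and> u = concat Cs \<and> v = x # concat (rots n x Cs)"
    then obtain Cs where C: "VF n 0 Cs" "u = concat Cs" "v = x # concat (rots n x Cs)" by blast
    have ws: "set ([x] @ u) \<subseteq> {1..n}" using VF_letters[OF C(1)] C x by auto
    have vv: "v = concat (Rl ([x] @ u))" using C Rl_cons by auto
    show "(u, v) \<in> Lleft lps_eq (lpsL n) [x]"
      using key[OF ws] concat_Rl_in[OF ws] vv C lpsL_eq by (auto simp: Lleft_def)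
  qed
  then show ?thesis by auto
qed

lemma Lnil_eq:
  "Lright lps_eq (lpsL n) [] = {(concat Cs, concat Cs) | Cs. VF n 0 Cs}"
  "Lleft lps_eq (lpsL n) [] = {(concat Cs, concat Cs) | Cs. VF n 0 Cs}"
proof -
  have "lps_eq u v \<and> u \<in> lpsL n \<and> v \<in> lpsL n \<longleftrightarrow> u = v \<and> u \<in> lpsL n" for u v
    using key[of u n v] lpsL_eq Rl_concat by (auto simp: lps_eq_def)
  then show "Lright lps_eq (lpsL n) [] = {(concat Cs, concat Cs) | Cs. VF n 0 Cs}"
    "Lleft lps_eq (lpsL n) [] = {(concat Cs, concat Cs) | Cs. VF n 0 Cs}"
    unfolding Lright_def Lleft_def lpsL_eq by auto
qed



lemma dec_distinct: "sorted_wrt (>) (C::nat list) \<Longrightarrow> distinct C"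
  by (induction C) auto

lemma col_len: "col n C \<Longrightarrow> length C \<le> n"
proof -
  assume c: "col n C"
  then have "length C = card (set C)" using dec_distinct distinct_card unfolding col_def by metis
  also have "\<dots> \<le> card {1..n}" using c unfolding col_def by (intro card_mono) auto
  finally show ?thesis by simp
qed

lemma col_last: "col n C \<Longrightarrow> last C \<in> {1..n}"
  unfolding col_def using last_in_set by blast

lemma zip_pad: "set xs \<subseteq> insert None (Some ` \<Sigma>) \<Longrightarrow> set ys \<subseteq> insert None (Some ` \<Sigma>) \<Longrightarrow>
  set (zip xs ys) \<subseteq> pad_alphabet \<Sigma>"
  unfolding pad_alphabet_def using set_zip_leftD set_zip_rightD by fastforce

lemma length_rot[simp]: "length (rot t C) = length C"
  unfolding rot_def by (induction C) auto

lemma set_rot[simp]: "set (rot t C) = set C"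
  unfolding rot_def by auto

lemma length_rots: "length (concat (rots n t Cs)) = length (concat Cs)"
  by (induction Cs arbitrary: t) auto

lemma nt_range: "col n C \<Longrightarrow> nt n t C \<in> {1..Suc n}"
proof -
  assume c: "col n C"
  show ?thesis
  proof (cases "filter (\<lambda>y. t \<le> y) C = []")
    case False
    then have "last (filter (\<lambda>y. t \<le> y) C) \<in> set C" using last_in_set by fastforce
    then show ?thesis using c False unfolding nt_def col_def by auto
  qed (simp add: nt_def)
qed

definition TA0 :: "nat \<Rightarrow> nat \<times> nat \<Rightarrow> nat list \<Rightarrow> nat \<times> nat \<Rightarrow> bool" where
  "TA0 n s w s' \<longleftrightarrow> fst s = 0 \<and>
     ((col n w \<and> snd s \<le> last w \<and> s' = (0, last w)) \<or> (w = [] \<and> s' = (1, 0)))"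

lemma TA0_sound: "reach (TA0 n) s w t \<Longrightarrow> t = (1, 0) \<Longrightarrow>
  (fst s = 0 \<longrightarrow> (\<exists>Cs. VF n (snd s) Cs \<and> w = concat Cs)) \<and> (fst s \<noteq> 0 \<longrightarrow> w = [])"
proof (induction rule: reach.induct)
  case (reach_step s b s' w t)
  have T: "fst s = 0" "(col n b \<and> snd s \<le> last b \<and> s' = (0, last b)) \<or> (b = [] \<and> s' = (1, 0))"
    using reach_step.hyps(1) unfolding TA0_def by auto
  from T(2) show ?case
  proof
    assume a: "col n b \<and> snd s \<le> last b \<and> s' = (0, last b)"
    then obtain Cs where "VF n (last b) Cs" "w = concat Cs" using reach_step.IH reach_step.prems by auto
    then have "VF n (snd s) (b # Cs) \<and> b @ w = concat (b # Cs)" using a by simp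
    then show ?thesis using T(1) by blast
  next
    assume a: "b = [] \<and> s' = (1, 0)"
    then have "w = []" using reach_step.IH reach_step.prems by auto
    then have "VF n (snd s) [] \<and> b @ w = concat []" using a by simp
    then show ?thesis using T(1) by blast
  qed
qed simp

lemma TA0_complete: "VF n b Cs \<Longrightarrow> reach (TA0 n) (0, b) (concat Cs) (1, 0)"
proof (induction Cs arbitrary: b)
  case Nil
  have "reach (TA0 n) (0, b) ([] @ []) (1, 0)"
    by (rule reach_step[of _ _ _ "(1,0)"]) (auto simp: TA0_def intro: reach_nil)
  then show ?case by simp
next
  case (Cons C Cs)
  then show ?case by (auto intro!: reach_step simp: TA0_def)
qed

lemma reg_L: "regular_over {1..n} (lpsL n)"
proof -
  have eq: "lpsL n = {w. reach (TA0 n) (0, 0) w (1, 0)}"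
    using TA0_sound[of n "(0,0)"] TA0_complete[of n 0] unfolding lpsL_eq by fastforce
  show ?thesis unfolding eq
    by (rule block_regular[where S = "{0..1} \<times> {0..n}" and N = n])
      (auto simp: TA0_def dest: col_len col_last, auto simp: col_def)
qed

definition Z :: "nat \<Rightarrow> nat \<Rightarrow> nat list list \<Rightarrow> (nat option \<times> nat option) list" where
  "Z n t Cs = zip (map Some (concat Cs)) (map Some (concat (rots n t Cs)))"

lemma Z_nil[simp]: "Z n t [] = []" by (simp add: Z_def)

lemma Z_cons: "Z n t (C # Cs) = zip (map Some C) (map Some (rot t C)) @ Z n (nt n t C) Cs"
  unfolding Z_def by simp

definition TD :: "nat \<Rightarrow> nat \<Rightarrow> nat \<times> nat \<times> nat \<Rightarrow> (nat option \<times> nat option) list \<Rightarrow> nat \<times> nat \<times> nat \<Rightarrow> bool" where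
  "TD n x s w s' \<longleftrightarrow> (case s of (ph, b, t) \<Rightarrow>
     (ph = 0 \<and> w = [(None, Some x)] \<and> s' = (1, 0, x)) \<or>
     (ph = 1 \<and> ((\<exists>C. col n C \<and> b \<le> last C \<and> w = zip (map Some C) (map Some (rot t C)) \<and>
          s' = (1, last C, nt n t C)) \<or> (w = [] \<and> s' = (2, 0, 0)))))"

lemma TD_sound: "reach (TD n x) s w t' \<Longrightarrow> t' = (2, 0, 0) \<Longrightarrow>
  (case s of (ph, b, t) \<Rightarrow>
    (ph = 1 \<longrightarrow> (\<exists>Cs. VF n b Cs \<and> w = Z n t Cs)) \<and>
    (ph = 0 \<longrightarrow> (\<exists>Cs. VF n 0 Cs \<and> w = (None, Some x) # Z n x Cs)) \<and>
    (ph \<noteq> 0 \<and> ph \<noteq> 1 \<longrightarrow> w = []))"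
proof (induction rule: reach.induct)
  case (reach_nil s)
  then show ?case by auto
next
  case (reach_step s blk s' w t')
  obtain ph b t where s: "s = (ph, b, t)" by (cases s) auto
  have IH: "case s' of (ph, b, t) \<Rightarrow>
    (ph = 1 \<longrightarrow> (\<exists>Cs. VF n b Cs \<and> w = Z n t Cs)) \<and>
    (ph = 0 \<longrightarrow> (\<exists>Cs. VF n 0 Cs \<and> w = (None, Some x) # Z n x Cs)) \<and>
    (ph \<noteq> 0 \<and> ph \<noteq> 1 \<longrightarrow> w = [])" using reach_step.IH reach_step.prems by blast
  have T: "(ph = 0 \<and> blk = [(None, Some x)] \<and> s' = (1, 0, x)) \<or>
     (ph = 1 \<and> ((\<exists>C. col n C \<and> b \<le> last C \<and> blk = zip (map Some C) (map Some (rot t C)) \<and>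
          s' = (1, last C, nt n t C)) \<or> (blk = [] \<and> s' = (2, 0, 0))))"
    using reach_step.hyps(1) s by (simp add: TD_def)
  then show ?case
  proof (elim disjE conjE exE)
    assume a: "ph = 0" "blk = [(None, Some x)]" "s' = (1, 0, x)"
    then obtain Cs where "VF n 0 Cs" "w = Z n x Cs" using IH by auto
    then show ?thesis using a s by auto
  next
    fix C assume a: "ph = 1" "col n C" "b \<le> last C" "blk = zip (map Some C) (map Some (rot t C))"
      "s' = (1, last C, nt n t C)"
    then obtain Cs where "VF n (last C) Cs" "w = Z n (nt n t C) Cs" using IH by auto
    then have "VF n b (C # Cs) \<and> blk @ w = Z n t (C # Cs)" using a by (simp add: Z_cons)
    then show ?thesis unfolding s prod.case using a(1) by (intro conjI impI) (blast, simp_all)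
  next
    assume a: "ph = 1" "blk = []" "s' = (2, 0, 0)"
    then have "w = []" using IH by auto
    then have "VF n b [] \<and> blk @ w = Z n t []" using a by simp
    then show ?thesis unfolding s prod.case using a(1) by (intro conjI impI) (blast, simp_all)
  qed
qed

lemma TD_complete: "VF n b Cs \<Longrightarrow> reach (TD n x) (1, b, t) (Z n t Cs) (2, 0, 0)"
proof (induction Cs arbitrary: b t)
  case Nil
  have "reach (TD n x) (1, b, t) ([] @ []) (2, 0, 0)"
    by (rule reach_step[of _ _ _ "(2,0,0)"]) (auto simp: TD_def intro: reach_nil)
  then show ?case by simp
next
  case (Cons C Cs)
  then show ?case unfolding Z_cons by (intro reach_step) (auto simp: TD_def)
qed

lemma TD_lang1: "{w. reach (TD n x) (1, 0, t) w (2, 0, 0)} = {Z n t Cs | Cs. VF n 0 Cs}"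
  using TD_sound[of n x "(1, 0, t)"] TD_complete[of n 0 _ x t] by fastforce

lemma TD_lang0: "{w. reach (TD n x) (0, 0, 0) w (2, 0, 0)} = {(None, Some x) # Z n x Cs | Cs. VF n 0 Cs}"
proof -
  have "reach (TD n x) (0, 0, 0) ([(None, Some x)] @ Z n x Cs) (2, 0, 0)" if "VF n 0 Cs" for Cs
    by (rule reach_step[OF _ TD_complete[OF that]]) (simp add: TD_def)
  then show ?thesis using TD_sound[of n x "(0, 0, 0)"] by fastforce
qed

lemma finite_pad[simp]: "finite \<Sigma> \<Longrightarrow> finite (pad_alphabet \<Sigma>)"
  by (simp add: pad_alphabet_def)

lemma zip_some_pad: "set A \<subseteq> \<Sigma> \<Longrightarrow> set B \<subseteq> \<Sigma> \<Longrightarrow>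
   set (zip (map Some A) (map Some B)) \<subseteq> pad_alphabet \<Sigma>"
  by (rule zip_pad) auto

lemma TD_reg: "x \<in> {1..n} \<Longrightarrow> s0 \<in> {0..2} \<times> {0..n} \<times> {0..Suc n} \<Longrightarrow>
   regular_over (pad_alphabet {1..n}) {w. reach (TD n x) s0 w (2, 0, 0)}"
proof (rule block_regular[where S = "{0..2} \<times> {0..n} \<times> {0..Suc n}" and N = "Suc n"])
  fix s blk s' assume x: "x \<in> {1..n}" and sS: "s \<in> {0..2} \<times> {0..n} \<times> {0..Suc n}" and T: "TD n x s blk s'"
  obtain ph b t where s: "s = (ph, b, t)" by (cases s) auto
  have "(ph = 0 \<and> blk = [(None, Some x)] \<and> s' = (1, 0, x)) \<or>
     (ph = 1 \<and> ((\<exists>C. col n C \<and> b \<le> last C \<and> blk = zip (map Some C) (map Some (rot t C)) \<and>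
          s' = (1, last C, nt n t C)) \<or> (blk = [] \<and> s' = (2, 0, 0))))"
    using T s by (simp add: TD_def)
  then show "s' \<in> {0..2} \<times> {0..n} \<times> {0..Suc n} \<and> length blk \<le> Suc n \<and> set blk \<subseteq> pad_alphabet {1..n}"
  proof (elim disjE conjE exE)
    fix C assume a: "ph = 1" "col n C" "b \<le> last C" "blk = zip (map Some C) (map Some (rot t C))"
      "s' = (1, last C, nt n t C)"
    have "set C \<subseteq> {1..n}" using a(2) by (simp add: col_def)
    then have "set blk \<subseteq> pad_alphabet {1..n}" using a(4) zip_some_pad[of C _ "rot t C"] by simp
    then show ?thesis using a col_len[OF a(2)] col_last[OF a(2)] nt_range[OF a(2), of t] by auto
  qed (use x in \<open>auto simp: pad_alphabet_def\<close>)
qed simp_all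



definition W :: "nat \<Rightarrow> nat \<Rightarrow> nat \<Rightarrow> nat list list \<Rightarrow> (nat option \<times> nat option) list" where
  "W n t c Cs = zip (map Some (concat Cs) @ [None]) (map Some (c # concat (rots n t Cs)))"

lemma W_nil[simp]: "W n t c [] = [(None, Some c)]" by (simp add: W_def)

lemma W_cons: "C \<noteq> [] \<Longrightarrow> W n t c (C # Cs) =
   zip (map Some C) (map Some (c # butlast (rot t C))) @ W n (nt n t C) (last (rot t C)) Cs"
proof -
  assume C: "C \<noteq> []"
  then have r: "rot t C \<noteq> []" using length_rot[of t C] by (metis length_0_conv)
  have e: "c # concat (rots n t (C # Cs)) = (c # butlast (rot t C)) @ (last (rot t C) # concat (rots n (nt n t C) Cs))"
    using r by simp
  have h1: "map Some (c # concat (rots n t (C # Cs))) = map Some (c # butlast (rot t C)) @ map Some (last (rot t C) # concat (rots n (nt n t C) Cs))"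
    by (simp only: e map_append)
  have h2: "map Some (concat (C # Cs)) @ [None] = map Some C @ (map Some (concat Cs) @ [None])" by simp
  have len: "length (map Some C) = length (map Some (c # butlast (rot t C)))" using C by (cases C) auto
  show ?thesis unfolding W_def h1 h2 zip_append[OF len] by simp
qed

definition TE :: "nat \<Rightarrow> nat \<times> nat \<times> nat \<times> nat \<Rightarrow> (nat option \<times> nat option) list \<Rightarrow> nat \<times> nat \<times> nat \<times> nat \<Rightarrow> bool" where
  "TE n s w s' \<longleftrightarrow> (case s of (ph, b, t, c) \<Rightarrow> ph = 0 \<and>
     ((\<exists>C. col n C \<and> b \<le> last C \<and> w = zip (map Some C) (map Some (c # butlast (rot t C))) \<and>
          s' = (0, last C, nt n t C, last (rot t C))) \<or> (w = [(None, Some c)] \<and> s' = (1, 0, 0, 0))))"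

lemma TE_sound: "reach (TE n) s w t' \<Longrightarrow> t' = (1, 0, 0, 0) \<Longrightarrow>
  (case s of (ph, b, t, c) \<Rightarrow> (ph = 0 \<longrightarrow> (\<exists>Cs. VF n b Cs \<and> w = W n t c Cs)) \<and> (ph \<noteq> 0 \<longrightarrow> w = []))"
proof (induction rule: reach.induct)
  case (reach_nil s)
  then show ?case by auto
next
  case (reach_step s blk s' w t')
  obtain ph b t c where s: "s = (ph, b, t, c)" by (cases s) auto
  have IH: "case s' of (ph, b, t, c) \<Rightarrow> (ph = 0 \<longrightarrow> (\<exists>Cs. VF n b Cs \<and> w = W n t c Cs)) \<and> (ph \<noteq> 0 \<longrightarrow> w = [])"
    using reach_step.IH reach_step.prems by blast
  have T: "ph = 0" "(\<exists>C. col n C \<and> b \<le> last C \<and> blk = zip (map Some C) (map Some (c # butlast (rot t C))) \<and>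
          s' = (0, last C, nt n t C, last (rot t C))) \<or> (blk = [(None, Some c)] \<and> s' = (1, 0, 0, 0))"
    using reach_step.hyps(1) s by (simp_all add: TE_def)
  from T(2) show ?case
  proof (elim disjE conjE exE)
    fix C assume a: "col n C" "b \<le> last C" "blk = zip (map Some C) (map Some (c # butlast (rot t C)))"
          "s' = (0, last C, nt n t C, last (rot t C))"
    then obtain Cs where "VF n (last C) Cs" "w = W n (nt n t C) (last (rot t C)) Cs" using IH by auto
    moreover have "C \<noteq> []" using a(1) by (simp add: col_def)
    ultimately have "VF n b (C # Cs) \<and> blk @ w = W n t c (C # Cs)" using a by (simp add: W_cons)
    then show ?thesis unfolding s prod.case using T(1) by blast
  next
    assume a: "blk = [(None, Some c)]" "s' = (1, 0, 0, 0)"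
    then have "w = []" using IH by auto
    then have "VF n b [] \<and> blk @ w = W n t c []" using a by simp
    then show ?thesis unfolding s prod.case using T(1) by blast
  qed
qed

lemma TE_complete: "VF n b Cs \<Longrightarrow> reach (TE n) (0, b, t, c) (W n t c Cs) (1, 0, 0, 0)"
proof (induction Cs arbitrary: b t c)
  case Nil
  have "reach (TE n) (0, b, t, c) ([(None, Some c)] @ []) (1, 0, 0, 0)"
    by (rule reach_step[of _ _ _ "(1,0,0,0)"]) (auto simp: TE_def intro: reach_nil)
  then show ?case by simp
next
  case (Cons C Cs)
  have "C \<noteq> []" using Cons.prems by (simp add: col_def)
  then show ?case unfolding W_cons[OF \<open>C \<noteq> []\<close>] using Cons by (intro reach_step) (auto simp: TE_def)
qed

lemma TE_lang: "{w. reach (TE n) (0, 0, x, x) w (1, 0, 0, 0)} = {W n x x Cs | Cs. VF n 0 Cs}"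
  using TE_sound[of n "(0, 0, x, x)"] TE_complete[of n 0 _ x x] by fastforce

lemma TE_reg: "x \<in> {1..n} \<Longrightarrow>
   regular_over (pad_alphabet {1..n}) {w. reach (TE n) (0, 0, x, x) w (1, 0, 0, 0)}"
proof (rule block_regular[where S = "({0::nat} \<times> {0..n} \<times> {0..Suc n} \<times> {1..n}) \<union> {(1,0,0,0)}" and N = "Suc n"])
  fix s blk s' assume x: "x \<in> {1..n}" and sS: "s \<in> ({0::nat} \<times> {0..n} \<times> {0..Suc n} \<times> {1..n}) \<union> {(1,0,0,0)}"
    and T: "TE n s blk s'"
  obtain ph b t c where s: "s = (ph, b, t, c)" by (cases s) auto
  have T: "ph = 0" "(\<exists>C. col n C \<and> b \<le> last C \<and> blk = zip (map Some C) (map Some (c # butlast (rot t C))) \<and>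
          s' = (0, last C, nt n t C, last (rot t C))) \<or> (blk = [(None, Some c)] \<and> s' = (1, 0, 0, 0))"
    using T s by (simp_all add: TE_def)
  have c: "c \<in> {1..n}" using sS s T(1) by auto
  from T(2) show "s' \<in> ({0::nat} \<times> {0..n} \<times> {0..Suc n} \<times> {1..n}) \<union> {(1,0,0,0)} \<and> length blk \<le> Suc n \<and>
     set blk \<subseteq> pad_alphabet {1..n}"
  proof (elim disjE conjE exE)
    fix C assume a: "col n C" "b \<le> last C" "blk = zip (map Some C) (map Some (c # butlast (rot t C)))"
          "s' = (0, last C, nt n t C, last (rot t C))"
    have sc: "set C \<subseteq> {1..n}" using a(1) by (simp add: col_def)
    have ne: "C \<noteq> []" using a(1) by (simp add: col_def)
    then have lr: "last (rot t C) \<in> {1..n}" using sc set_rot[of t C] length_rot[of t C]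
      by (metis last_in_set length_0_conv subsetD)
    have "set (butlast (rot t C)) \<subseteq> {1..n}" using sc in_set_butlastD by fastforce
    then have "set (c # butlast (rot t C)) \<subseteq> {1..n}" using c by simp
    then have "set blk \<subseteq> pad_alphabet {1..n}" using a(3) zip_some_pad[OF sc] by blast
    then show ?thesis using a col_len[OF a(1)] col_last[OF a(1)] nt_range[OF a(1), of t] lr by auto
  qed (use c in \<open>auto simp: pad_alphabet_def\<close>)
qed (auto simp: pad_alphabet_def)

lemma deltaR_Cons: "deltaR (a # u) (b # v) = (Some a, Some b) # deltaR u v"
  by (simp add: deltaR_def Let_def)

lemma deltaR_app: "deltaR (C @ u) (C @ v) = zip (map Some C) (map Some C) @ deltaR u v"
  by (induction C) (auto simp: deltaR_Cons)

lemma deltaR_len1: "length v = Suc (length u) \<Longrightarrow> deltaR u v = zip (map Some u @ [None]) (map Some v)"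
  by (simp add: deltaR_def Let_def)

lemma deltaL_len1: "length v = Suc (length u) \<Longrightarrow> deltaL u v = zip (None # map Some u) (map Some v)"
  by (simp add: deltaL_def Let_def)

lemma deltaR_same: "deltaR u u = zip (map Some u) (map Some u)"
  by (simp add: deltaR_def Let_def)

lemma deltaL_same: "deltaL u u = zip (map Some u) (map Some u)"
  by (simp add: deltaL_def Let_def)

lemma len_rinsert: "length (concat (rinsert x Cs)) = Suc (length (concat Cs))"
  by (induction Cs) auto

definition Y :: "nat \<Rightarrow> nat list list \<Rightarrow> (nat option \<times> nat option) list" where
  "Y c Ds = zip (map Some (concat Ds) @ [None]) (map Some (c # concat Ds))"

lemma Y_nil[simp]: "Y c [] = [(None, Some c)]" by (simp add: Y_def)

lemma Y_cons: "D \<noteq> [] \<Longrightarrow> Y c (D # Ds) = zip (map Some D) (map Some (c # butlast D)) @ Y (last D) Ds"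
proof -
  assume D: "D \<noteq> []"
  have e: "c # concat (D # Ds) = (c # butlast D) @ (last D # concat Ds)" using D by simp
  have h1: "map Some (c # concat (D # Ds)) = map Some (c # butlast D) @ map Some (last D # concat Ds)"
    by (simp only: e map_append)
  have h2: "map Some (concat (D # Ds)) @ [None] = map Some D @ (map Some (concat Ds) @ [None])" by simp
  have len: "length (map Some D) = length (map Some (c # butlast D))" using D by (cases D) auto
  show ?thesis unfolding Y_def h1 h2 zip_append[OF len] by simp
qed

definition TR :: "nat \<Rightarrow> nat \<Rightarrow> nat \<times> nat \<times> nat \<Rightarrow> (nat option \<times> nat option) list \<Rightarrow> nat \<times> nat \<times> nat \<Rightarrow> bool" where
  "TR n x s w s' \<longleftrightarrow> (case s of (ph, b, c) \<Rightarrow>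
     (ph = 0 \<and> ((\<exists>C. col n C \<and> b \<le> last C \<and> last C \<le> x \<and> w = zip (map Some C) (map Some C) \<and> s' = (0, last C, 0)) \<or>
        (\<exists>C. col n C \<and> b \<le> last C \<and> x < last C \<and> w = zip (map Some C) (map Some C) \<and> s' = (1, last C, x)) \<or>
        (w = [(None, Some x)] \<and> s' = (2, 0, 0)))) \<or>
     (ph = 1 \<and> ((\<exists>D. col n D \<and> b \<le> last D \<and> w = zip (map Some D) (map Some (c # butlast D)) \<and> s' = (1, last D, last D)) \<or>
        (w = [(None, Some c)] \<and> s' = (2, 0, 0)))))"

lemma TR_sound: "reach (TR n x) s w t' \<Longrightarrow> t' = (2, 0, 0) \<Longrightarrow>
  (case s of (ph, b, c) \<Rightarrow>
    (ph = 0 \<longrightarrow> (\<exists>Cs. VF n b Cs \<and> w = deltaR (concat Cs) (concat (rinsert x Cs)))) \<and>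
    (ph = 1 \<longrightarrow> (\<exists>Ds. VF n b Ds \<and> w = Y c Ds)) \<and>
    (ph \<noteq> 0 \<and> ph \<noteq> 1 \<longrightarrow> w = []))"
proof (induction rule: reach.induct)
  case (reach_nil s)
  then show ?case by auto
next
  case (reach_step s blk s' w t')
  obtain ph b c where s: "s = (ph, b, c)" by (cases s) auto
  have IH: "case s' of (ph, b, c) \<Rightarrow>
    (ph = 0 \<longrightarrow> (\<exists>Cs. VF n b Cs \<and> w = deltaR (concat Cs) (concat (rinsert x Cs)))) \<and>
    (ph = 1 \<longrightarrow> (\<exists>Ds. VF n b Ds \<and> w = Y c Ds)) \<and>
    (ph \<noteq> 0 \<and> ph \<noteq> 1 \<longrightarrow> w = [])"
    using reach_step.IH reach_step.prems by blast
  have T: "(ph = 0 \<and> ((\<exists>C. col n C \<and> b \<le> last C \<and> last C \<le> x \<and> blk = zip (map Some C) (map Some C) \<and> s' = (0, last C, 0)) \<or>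
        (\<exists>C. col n C \<and> b \<le> last C \<and> x < last C \<and> blk = zip (map Some C) (map Some C) \<and> s' = (1, last C, x)) \<or>
        (blk = [(None, Some x)] \<and> s' = (2, 0, 0)))) \<or>
     (ph = 1 \<and> ((\<exists>D. col n D \<and> b \<le> last D \<and> blk = zip (map Some D) (map Some (c # butlast D)) \<and> s' = (1, last D, last D)) \<or>
        (blk = [(None, Some c)] \<and> s' = (2, 0, 0))))"
    using reach_step.hyps(1) s by (simp add: TR_def)
  then show ?case
  proof (elim disjE conjE exE)
    fix C assume a: "ph = 0" "col n C" "b \<le> last C" "last C \<le> x" "blk = zip (map Some C) (map Some C)"
      "s' = (0, last C, 0)"
    then obtain Cs where C: "VF n (last C) Cs" "w = deltaR (concat Cs) (concat (rinsert x Cs))" using IH by auto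
    have "concat (rinsert x (C # Cs)) = C @ concat (rinsert x Cs)" using a(4) by simp
    then have "VF n b (C # Cs) \<and> blk @ w = deltaR (concat (C # Cs)) (concat (rinsert x (C # Cs)))"
      using a C by (simp add: deltaR_app)
    then have X: "\<exists>Cs. VF n b Cs \<and> blk @ w = deltaR (concat Cs) (concat (rinsert x Cs))" by blast
    then show ?thesis unfolding s prod.case using a(1) X by simp
  next
    fix C assume a: "ph = 0" "col n C" "b \<le> last C" "x < last C" "blk = zip (map Some C) (map Some C)"
      "s' = (1, last C, x)"
    then obtain Cs where C: "VF n (last C) Cs" "w = Y x Cs" using IH by auto
    have e1: "concat (rinsert x (C # Cs)) = C @ (x # concat Cs)" using a(4) by simp
    have e2: "deltaR (concat Cs) (x # concat Cs) = Y x Cs" by (simp add: deltaR_len1 Y_def)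
    have "deltaR (concat (C # Cs)) (concat (rinsert x (C # Cs))) = blk @ Y x Cs"
      using e1 e2 a(5) by (simp add: deltaR_app)
    then have "VF n b (C # Cs) \<and> blk @ w = deltaR (concat (C # Cs)) (concat (rinsert x (C # Cs)))"
      using a C by simp
    then have X: "\<exists>Cs. VF n b Cs \<and> blk @ w = deltaR (concat Cs) (concat (rinsert x Cs))" by blast
    then show ?thesis unfolding s prod.case using a(1) X by simp
  next
    assume a: "ph = 0" "blk = [(None, Some x)]" "s' = (2, 0, 0)"
    then have "w = []" using IH by auto
    then have "VF n b [] \<and> blk @ w = deltaR (concat []) (concat (rinsert x []))" using a by (simp add: deltaR_def)
    then have X: "\<exists>Cs. VF n b Cs \<and> blk @ w = deltaR (concat Cs) (concat (rinsert x Cs))" by blast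
    then show ?thesis unfolding s prod.case using a(1) X by simp
  next
    fix D assume a: "ph = 1" "col n D" "b \<le> last D" "blk = zip (map Some D) (map Some (c # butlast D))"
      "s' = (1, last D, last D)"
    then obtain Ds where C: "VF n (last D) Ds" "w = Y (last D) Ds" using IH by auto
    have "D \<noteq> []" using a(2) by (simp add: col_def)
    then have "VF n b (D # Ds) \<and> blk @ w = Y c (D # Ds)" using a C by (simp add: Y_cons)
    then have X: "\<exists>Cs. VF n b Cs \<and> blk @ w = Y c Cs" by blast
    then show ?thesis unfolding s prod.case using a(1) X by simp
  next
    assume a: "ph = 1" "blk = [(None, Some c)]" "s' = (2, 0, 0)"
    then have "w = []" using IH by auto
    then have "VF n b [] \<and> blk @ w = Y c []" using a by simp
    then have X: "\<exists>Cs. VF n b Cs \<and> blk @ w = Y c Cs" by blast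
    then show ?thesis unfolding s prod.case using a(1) X by simp
  qed
qed

lemma TR_complete1: "VF n b Ds \<Longrightarrow> reach (TR n x) (1, b, c) (Y c Ds) (2, 0, 0)"
proof (induction Ds arbitrary: b c)
  case Nil
  have "reach (TR n x) (1, b, c) ([(None, Some c)] @ []) (2, 0, 0)"
    by (rule reach_step[of _ _ _ "(2,0,0)"]) (auto simp: TR_def intro: reach_nil)
  then show ?case by simp
next
  case (Cons D Ds)
  have "D \<noteq> []" using Cons.prems by (simp add: col_def)
  have t: "TR n x (1, b, c) (zip (map Some D) (map Some (c # butlast D))) (1, last D, last D)"
    unfolding TR_def using Cons.prems by auto
  have r: "reach (TR n x) (1, last D, last D) (Y (last D) Ds) (2, 0, 0)" using Cons by simp
  show ?case unfolding Y_cons[OF \<open>D \<noteq> []\<close>] by (rule reach_step[OF t r])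
qed

lemma TR_complete0: "VF n b Cs \<Longrightarrow>
   reach (TR n x) (0, b, 0) (deltaR (concat Cs) (concat (rinsert x Cs))) (2, 0, 0)"
proof (induction Cs arbitrary: b)
  case Nil
  have "reach (TR n x) (0, b, 0) ([(None, Some x)] @ []) (2, 0, 0)"
    by (rule reach_step[of _ _ _ "(2,0,0)"]) (auto simp: TR_def intro: reach_nil)
  then show ?case by (simp add: deltaR_def)
next
  case (Cons C Cs)
  show ?case
  proof (cases "x < last C")
    case True
    have "concat (rinsert x (C # Cs)) = C @ (x # concat Cs)" using True by simp
    then have e: "deltaR (concat (C # Cs)) (concat (rinsert x (C # Cs))) = zip (map Some C) (map Some C) @ Y x Cs"
      by (simp add: deltaR_app deltaR_len1 Y_def)
    have t: "TR n x (0, b, 0) (zip (map Some C) (map Some C)) (1, last C, x)"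
      unfolding TR_def using Cons.prems True by auto
    have r: "reach (TR n x) (1, last C, x) (Y x Cs) (2, 0, 0)" using Cons.prems TR_complete1 by simp
    show ?thesis unfolding e by (rule reach_step[OF t r])
  next
    case False
    have "concat (rinsert x (C # Cs)) = C @ concat (rinsert x Cs)" using False by simp
    then have e: "deltaR (concat (C # Cs)) (concat (rinsert x (C # Cs))) =
       zip (map Some C) (map Some C) @ deltaR (concat Cs) (concat (rinsert x Cs))"
      by (simp add: deltaR_app)
    have t: "TR n x (0, b, 0) (zip (map Some C) (map Some C)) (0, last C, 0)"
      unfolding TR_def using Cons.prems False by auto
    have r: "reach (TR n x) (0, last C, 0) (deltaR (concat Cs) (concat (rinsert x Cs))) (2, 0, 0)"
      using Cons by simp
    show ?thesis unfolding e by (rule reach_step[OF t r])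
  qed
qed

lemma TR_lang: "{w. reach (TR n x) (0, 0, 0) w (2, 0, 0)} =
   {deltaR (concat Cs) (concat (rinsert x Cs)) | Cs. VF n 0 Cs}"
  using TR_sound[of n x "(0, 0, 0)"] TR_complete0[of n 0 _ x] by fastforce



lemma TR_reg: "x \<in> {1..n} \<Longrightarrow>
   regular_over (pad_alphabet {1..n}) {w. reach (TR n x) (0, 0, 0) w (2, 0, 0)}"
proof (rule block_regular[where S = "({0::nat} \<times> {0..n} \<times> {0}) \<union> ({1} \<times> {0..n} \<times> {1..n}) \<union> {(2,0,0)}" and N = "Suc n"])
  fix s blk s' assume x: "x \<in> {1..n}" and sS: "s \<in> ({0::nat} \<times> {0..n} \<times> {0}) \<union> ({1} \<times> {0..n} \<times> {1..n}) \<union> {(2,0,0)}"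
    and T: "TR n x s blk s'"
  obtain ph b c where s: "s = (ph, b, c)" by (cases s) auto
  have T: "(ph = 0 \<and> ((\<exists>C. col n C \<and> b \<le> last C \<and> last C \<le> x \<and> blk = zip (map Some C) (map Some C) \<and> s' = (0, last C, 0)) \<or>
        (\<exists>C. col n C \<and> b \<le> last C \<and> x < last C \<and> blk = zip (map Some C) (map Some C) \<and> s' = (1, last C, x)) \<or>
        (blk = [(None, Some x)] \<and> s' = (2, 0, 0)))) \<or>
     (ph = 1 \<and> ((\<exists>D. col n D \<and> b \<le> last D \<and> blk = zip (map Some D) (map Some (c # butlast D)) \<and> s' = (1, last D, last D)) \<or>
        (blk = [(None, Some c)] \<and> s' = (2, 0, 0))))"
    using T s by (simp add: TR_def)
  then show "s' \<in> ({0::nat} \<times> {0..n} \<times> {0}) \<union> ({1} \<times> {0..n} \<times> {1..n}) \<union> {(2,0,0)} \<and> length blk \<le> Suc n \<and>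
     set blk \<subseteq> pad_alphabet {1..n}"
  proof (elim disjE conjE exE)
    fix C assume a: "ph = 0" "col n C" "b \<le> last C" "last C \<le> x" "blk = zip (map Some C) (map Some C)"
      "s' = (0, last C, 0)"
    have sc: "set C \<subseteq> {1..n}" using a(2) by (simp add: col_def)
    then have "set blk \<subseteq> pad_alphabet {1..n}" using a(5) zip_some_pad[OF sc sc] by blast
    then show ?thesis using a col_len[OF a(2)] col_last[OF a(2)] by auto
  next
    fix C assume a: "ph = 0" "col n C" "b \<le> last C" "x < last C" "blk = zip (map Some C) (map Some C)"
      "s' = (1, last C, x)"
    have sc: "set C \<subseteq> {1..n}" using a(2) by (simp add: col_def)
    then have "set blk \<subseteq> pad_alphabet {1..n}" using a(5) zip_some_pad[OF sc sc] by blast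
    then show ?thesis using a col_len[OF a(2)] col_last[OF a(2)] x by auto
  next
    fix D assume a: "ph = 1" "col n D" "b \<le> last D" "blk = zip (map Some D) (map Some (c # butlast D))"
      "s' = (1, last D, last D)"
    have sc: "set D \<subseteq> {1..n}" using a(2) by (simp add: col_def)
    have c: "c \<in> {1..n}" using sS s a(1) by auto
    have "set (c # butlast D) \<subseteq> {1..n}" using sc c in_set_butlastD by fastforce
    then have "set blk \<subseteq> pad_alphabet {1..n}" using a(4) zip_some_pad[OF sc] by blast
    then show ?thesis using a col_len[OF a(2)] col_last[OF a(2)] by auto
  next
    assume a: "ph = 1" "blk = [(None, Some c)]" "s' = (2, 0, 0)"
    have c: "c \<in> {1..n}" using sS s a(1) by auto
    then show ?thesis using a by (auto simp: pad_alphabet_def)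
  qed (use x in \<open>auto simp: pad_alphabet_def\<close>)
qed (auto simp: pad_alphabet_def)

definition opt :: "nat \<Rightarrow> nat option" where "opt c = (if c = 0 then None else Some c)"

lemma zip_shift: "C \<noteq> [] \<Longrightarrow> zip (oc # map Some (C @ U)) (map Some (C @ V)) =
   zip (oc # map Some (butlast C)) (map Some C) @ zip (Some (last C) # map Some U) (map Some V)"
proof -
  assume C: "C \<noteq> []"
  obtain C' a where Ca: "C = C' @ [a]" using C by (cases C rule: rev_cases) auto
  have e: "oc # map Some (C @ U) = (oc # map Some (butlast C)) @ (Some (last C) # map Some U)"
    using Ca by simp
  have e2: "map Some (C @ V) = map Some C @ map Some V" by simp
  have len: "length (oc # map Some (butlast C)) = length (map Some C)" using C by (cases C) auto
  show ?thesis unfolding e e2 zip_append[OF len] by simp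
qed

definition TL :: "nat \<Rightarrow> nat \<Rightarrow> nat \<times> nat \<times> nat \<Rightarrow> (nat option \<times> nat option) list \<Rightarrow> nat \<times> nat \<times> nat \<Rightarrow> bool" where
  "TL n x s w s' \<longleftrightarrow> (case s of (ph, b, c) \<Rightarrow>
     (ph = 0 \<and> ((\<exists>C. col n C \<and> b \<le> last C \<and> last C \<le> x \<and> w = zip (opt c # map Some (butlast C)) (map Some C) \<and> s' = (0, last C, last C)) \<or>
        (\<exists>C. col n C \<and> b \<le> last C \<and> x < last C \<and> w = zip (opt c # map Some (butlast C)) (map Some C) @ [(Some (last C), Some x)] \<and> s' = (1, last C, 0)) \<or>
        (w = [(opt c, Some x)] \<and> s' = (2, 0, 0)))) \<or>
     (ph = 1 \<and> ((\<exists>D. col n D \<and> b \<le> last D \<and> w = zip (map Some D) (map Some D) \<and> s' = (1, last D, 0)) \<or>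
        (w = [] \<and> s' = (2, 0, 0)))))"

lemma opt_last: "col n C \<Longrightarrow> opt (last C) = Some (last C)"
  using col_last[of n C] by (auto simp: opt_def)

lemma TL_sound: "reach (TL n x) s w t' \<Longrightarrow> t' = (2, 0, 0) \<Longrightarrow>
  (case s of (ph, b, c) \<Rightarrow>
    (ph = 0 \<longrightarrow> (\<exists>Cs. VF n b Cs \<and> w = zip (opt c # map Some (concat Cs)) (map Some (concat (rinsert x Cs))))) \<and>
    (ph = 1 \<longrightarrow> (\<exists>Ds. VF n b Ds \<and> w = zip (map Some (concat Ds)) (map Some (concat Ds)))) \<and>
    (ph \<noteq> 0 \<and> ph \<noteq> 1 \<longrightarrow> w = []))"
proof (induction rule: reach.induct)
  case (reach_nil s)
  then show ?case by auto
next
  case (reach_step s blk s' w t')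
  obtain ph b c where s: "s = (ph, b, c)" by (cases s) auto
  have IH: "case s' of (ph, b, c) \<Rightarrow>
    (ph = 0 \<longrightarrow> (\<exists>Cs. VF n b Cs \<and> w = zip (opt c # map Some (concat Cs)) (map Some (concat (rinsert x Cs))))) \<and>
    (ph = 1 \<longrightarrow> (\<exists>Ds. VF n b Ds \<and> w = zip (map Some (concat Ds)) (map Some (concat Ds)))) \<and>
    (ph \<noteq> 0 \<and> ph \<noteq> 1 \<longrightarrow> w = [])"
    using reach_step.IH reach_step.prems by blast
  have T: "(ph = 0 \<and> ((\<exists>C. col n C \<and> b \<le> last C \<and> last C \<le> x \<and> blk = zip (opt c # map Some (butlast C)) (map Some C) \<and> s' = (0, last C, last C)) \<or>
        (\<exists>C. col n C \<and> b \<le> last C \<and> x < last C \<and> blk = zip (opt c # map Some (butlast C)) (map Some C) @ [(Some (last C), Some x)] \<and> s' = (1, last C, 0)) \<or>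
        (blk = [(opt c, Some x)] \<and> s' = (2, 0, 0)))) \<or>
     (ph = 1 \<and> ((\<exists>D. col n D \<and> b \<le> last D \<and> blk = zip (map Some D) (map Some D) \<and> s' = (1, last D, 0)) \<or>
        (blk = [] \<and> s' = (2, 0, 0))))"
    using reach_step.hyps(1) s by (simp add: TL_def)
  then show ?case
  proof (elim disjE conjE exE)
    fix C assume a: "ph = 0" "col n C" "b \<le> last C" "last C \<le> x" "blk = zip (opt c # map Some (butlast C)) (map Some C)"
      "s' = (0, last C, last C)"
    then obtain Cs where C: "VF n (last C) Cs" "w = zip (opt (last C) # map Some (concat Cs)) (map Some (concat (rinsert x Cs)))"
      using IH by auto
    have ne: "C \<noteq> []" using a(2) by (simp add: col_def)
    have "concat (rinsert x (C # Cs)) = C @ concat (rinsert x Cs)" using a(4) by simp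
    then have "zip (opt c # map Some (concat (C # Cs))) (map Some (concat (rinsert x (C # Cs)))) = blk @ w"
      using zip_shift[OF ne, of "opt c" "concat Cs" "concat (rinsert x Cs)"] a(5) C(2) opt_last[OF a(2)] by simp
    then have X: "\<exists>Cs. VF n b Cs \<and> blk @ w = zip (opt c # map Some (concat Cs)) (map Some (concat (rinsert x Cs)))"
      using a C by (intro exI[of _ "C # Cs"]) simp
    then show ?thesis unfolding s prod.case using a(1) X by simp
  next
    fix C assume a: "ph = 0" "col n C" "b \<le> last C" "x < last C" "blk = zip (opt c # map Some (butlast C)) (map Some C) @ [(Some (last C), Some x)]"
      "s' = (1, last C, 0)"
    then obtain Cs where C: "VF n (last C) Cs" "w = zip (map Some (concat Cs)) (map Some (concat Cs))"
      using IH by auto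
    have ne: "C \<noteq> []" using a(2) by (simp add: col_def)
    have "concat (rinsert x (C # Cs)) = C @ (x # concat Cs)" using a(4) by simp
    then have "zip (opt c # map Some (concat (C # Cs))) (map Some (concat (rinsert x (C # Cs)))) = blk @ w"
      using zip_shift[OF ne, of "opt c" "concat Cs" "x # concat Cs"] a(5) C(2) by simp
    then have X: "\<exists>Cs. VF n b Cs \<and> blk @ w = zip (opt c # map Some (concat Cs)) (map Some (concat (rinsert x Cs)))"
      using a C by (intro exI[of _ "C # Cs"]) simp
    then show ?thesis unfolding s prod.case using a(1) X by simp
  next
    assume a: "ph = 0" "blk = [(opt c, Some x)]" "s' = (2, 0, 0)"
    then have "w = []" using IH by auto
    then have X: "\<exists>Cs. VF n b Cs \<and> blk @ w = zip (opt c # map Some (concat Cs)) (map Some (concat (rinsert x Cs)))"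
      using a by (intro exI[of _ "[]"]) simp
    then show ?thesis unfolding s prod.case using a(1) X by simp
  next
    fix D assume a: "ph = 1" "col n D" "b \<le> last D" "blk = zip (map Some D) (map Some D)" "s' = (1, last D, 0)"
    then obtain Ds where C: "VF n (last D) Ds" "w = zip (map Some (concat Ds)) (map Some (concat Ds))" using IH by auto
    then have X: "\<exists>Ds. VF n b Ds \<and> blk @ w = zip (map Some (concat Ds)) (map Some (concat Ds))"
      using a by (intro exI[of _ "D # Ds"]) simp
    then show ?thesis unfolding s prod.case using a(1) X by simp
  next
    assume a: "ph = 1" "blk = []" "s' = (2, 0, 0)"
    then have "w = []" using IH by auto
    then have X: "\<exists>Ds. VF n b Ds \<and> blk @ w = zip (map Some (concat Ds)) (map Some (concat Ds))"
      using a by (intro exI[of _ "[]"]) simp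
    then show ?thesis unfolding s prod.case using a(1) X by simp
  qed
qed

lemma TL_complete1: "VF n b Ds \<Longrightarrow> reach (TL n x) (1, b, 0) (zip (map Some (concat Ds)) (map Some (concat Ds))) (2, 0, 0)"
proof (induction Ds arbitrary: b)
  case Nil
  have "reach (TL n x) (1, b, 0) ([] @ []) (2, 0, 0)"
    by (rule reach_step[of _ _ _ "(2,0,0)"]) (auto simp: TL_def intro: reach_nil)
  then show ?case by simp
next
  case (Cons D Ds)
  have t: "TL n x (1, b, 0) (zip (map Some D) (map Some D)) (1, last D, 0)"
    unfolding TL_def using Cons.prems by auto
  have r: "reach (TL n x) (1, last D, 0) (zip (map Some (concat Ds)) (map Some (concat Ds))) (2, 0, 0)"
    using Cons by simp
  show ?case using reach_step[OF t r] by simp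
qed

lemma TL_complete: "VF n b Cs \<Longrightarrow>
   reach (TL n x) (0, b, c) (zip (opt c # map Some (concat Cs)) (map Some (concat (rinsert x Cs)))) (2, 0, 0)"
proof (induction Cs arbitrary: b c)
  case Nil
  have "reach (TL n x) (0, b, c) ([(opt c, Some x)] @ []) (2, 0, 0)"
    by (rule reach_step[of _ _ _ "(2,0,0)"]) (auto simp: TL_def intro: reach_nil)
  then show ?case by simp
next
  case (Cons C Cs)
  have ne: "C \<noteq> []" using Cons.prems by (simp add: col_def)
  show ?case
  proof (cases "x < last C")
    case True
    have "concat (rinsert x (C # Cs)) = C @ (x # concat Cs)" using True by simp
    then have e: "zip (opt c # map Some (concat (C # Cs))) (map Some (concat (rinsert x (C # Cs)))) =
      (zip (opt c # map Some (butlast C)) (map Some C) @ [(Some (last C), Some x)]) @ zip (map Some (concat Cs)) (map Some (concat Cs))"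
      using zip_shift[OF ne, of "opt c" "concat Cs" "x # concat Cs"] by simp
    have t: "TL n x (0, b, c) (zip (opt c # map Some (butlast C)) (map Some C) @ [(Some (last C), Some x)]) (1, last C, 0)"
      unfolding TL_def using Cons.prems True by auto
    have r: "reach (TL n x) (1, last C, 0) (zip (map Some (concat Cs)) (map Some (concat Cs))) (2, 0, 0)"
      using Cons.prems TL_complete1 by simp
    show ?thesis unfolding e by (rule reach_step[OF t r])
  next
    case False
    have "concat (rinsert x (C # Cs)) = C @ concat (rinsert x Cs)" using False by simp
    then have e: "zip (opt c # map Some (concat (C # Cs))) (map Some (concat (rinsert x (C # Cs)))) =
      zip (opt c # map Some (butlast C)) (map Some C) @ zip (opt (last C) # map Some (concat Cs)) (map Some (concat (rinsert x Cs)))"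
      using zip_shift[OF ne, of "opt c" "concat Cs" "concat (rinsert x Cs)"] opt_last[of n C] Cons.prems by simp
    have t: "TL n x (0, b, c) (zip (opt c # map Some (butlast C)) (map Some C)) (0, last C, last C)"
      unfolding TL_def using Cons.prems False by auto
    have r: "reach (TL n x) (0, last C, last C) (zip (opt (last C) # map Some (concat Cs)) (map Some (concat (rinsert x Cs)))) (2, 0, 0)"
      using Cons by simp
    show ?thesis unfolding e by (rule reach_step[OF t r])
  qed
qed

lemma TL_lang: "{w. reach (TL n x) (0, 0, 0) w (2, 0, 0)} =
   {deltaL (concat Cs) (concat (rinsert x Cs)) | Cs. VF n 0 Cs}"
proof -
  have "deltaL (concat Cs) (concat (rinsert x Cs)) = zip (opt 0 # map Some (concat Cs)) (map Some (concat (rinsert x Cs)))" for Cs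
    by (simp add: deltaL_len1 len_rinsert opt_def)
  then show ?thesis using TL_sound[of n x "(0, 0, 0)"] TL_complete[of n 0 _ x 0] by fastforce
qed



lemma opt_in: "c \<in> {0..n} \<Longrightarrow> opt c \<in> insert None (Some ` {1..n})"
  by (auto simp: opt_def)

lemma TL_reg: "x \<in> {1..n} \<Longrightarrow>
   regular_over (pad_alphabet {1..n}) {w. reach (TL n x) (0, 0, 0) w (2, 0, 0)}"
proof (rule block_regular[where S = "({0::nat} \<times> {0..n} \<times> {0..n}) \<union> ({1} \<times> {0..n} \<times> {0}) \<union> {(2,0,0)}" and N = "Suc n"])
  fix s blk s' assume x: "x \<in> {1..n}" and sS: "s \<in> ({0::nat} \<times> {0..n} \<times> {0..n}) \<union> ({1} \<times> {0..n} \<times> {0}) \<union> {(2,0,0)}"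
    and T: "TL n x s blk s'"
  obtain ph b c where s: "s = (ph, b, c)" by (cases s) auto
  have T: "(ph = 0 \<and> ((\<exists>C. col n C \<and> b \<le> last C \<and> last C \<le> x \<and> blk = zip (opt c # map Some (butlast C)) (map Some C) \<and> s' = (0, last C, last C)) \<or>
        (\<exists>C. col n C \<and> b \<le> last C \<and> x < last C \<and> blk = zip (opt c # map Some (butlast C)) (map Some C) @ [(Some (last C), Some x)] \<and> s' = (1, last C, 0)) \<or>
        (blk = [(opt c, Some x)] \<and> s' = (2, 0, 0)))) \<or>
     (ph = 1 \<and> ((\<exists>D. col n D \<and> b \<le> last D \<and> blk = zip (map Some D) (map Some D) \<and> s' = (1, last D, 0)) \<or>
        (blk = [] \<and> s' = (2, 0, 0))))"
    using T s by (simp add: TL_def)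
  have c: "ph = 0 \<Longrightarrow> opt c \<in> insert None (Some ` {1..n})" using sS s opt_in by auto
  have zb: "set (zip (opt c # map Some (butlast C)) (map Some C)) \<subseteq> pad_alphabet {1..n}"
    if "col n C" "ph = 0" for C
  proof (rule zip_pad)
    have sc: "set C \<subseteq> {1..n}" using that by (simp add: col_def)
    then show "set (map Some C) \<subseteq> insert None (Some ` {1..n})" by auto
    have "set (butlast C) \<subseteq> {1..n}" using sc in_set_butlastD by fastforce
    then show "set (opt c # map Some (butlast C)) \<subseteq> insert None (Some ` {1..n})" using c[OF that(2)] by auto
  qed
  from T show "s' \<in> ({0::nat} \<times> {0..n} \<times> {0..n}) \<union> ({1} \<times> {0..n} \<times> {0}) \<union> {(2,0,0)} \<and> length blk \<le> Suc n \<and>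
     set blk \<subseteq> pad_alphabet {1..n}"
  proof (elim disjE conjE exE)
    fix C assume a: "ph = 0" "col n C" "b \<le> last C" "last C \<le> x" "blk = zip (opt c # map Some (butlast C)) (map Some C)"
      "s' = (0, last C, last C)"
    then show ?thesis using zb[OF a(2,1)] col_len[OF a(2)] col_last[OF a(2)] by auto
  next
    fix C assume a: "ph = 0" "col n C" "b \<le> last C" "x < last C" "blk = zip (opt c # map Some (butlast C)) (map Some C) @ [(Some (last C), Some x)]"
      "s' = (1, last C, 0)"
    have "(Some (last C), Some x) \<in> pad_alphabet {1..n}" using col_last[OF a(2)] x by (auto simp: pad_alphabet_def)
    then show ?thesis using a zb[OF a(2,1)] col_len[OF a(2)] col_last[OF a(2)] by auto
  next
    assume a: "ph = 0" "blk = [(opt c, Some x)]" "s' = (2, 0, 0)"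
    then show ?thesis using c x by (auto simp: pad_alphabet_def)
  next
    fix D assume a: "ph = 1" "col n D" "b \<le> last D" "blk = zip (map Some D) (map Some D)" "s' = (1, last D, 0)"
    have sc: "set D \<subseteq> {1..n}" using a(2) by (simp add: col_def)
    then have "set blk \<subseteq> pad_alphabet {1..n}" using a(4) zip_some_pad[OF sc sc] by blast
    then show ?thesis using a col_len[OF a(2)] col_last[OF a(2)] by auto
  qed auto
qed (auto simp: pad_alphabet_def)

lemma TD_reg1: "t \<in> {0..Suc n} \<Longrightarrow>
   regular_over (pad_alphabet {1..n}) {w. reach (TD n x) (1, 0, t) w (2, 0, 0)}"
proof (rule block_regular[where S = "{1..2} \<times> {0..n} \<times> {0..Suc n}" and N = "Suc n"])
  fix s blk s' assume sS: "s \<in> {1..2} \<times> {0..n} \<times> {0..Suc n}" and T: "TD n x s blk s'"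
  obtain ph b t where s: "s = (ph, b, t)" by (cases s) auto
  have "(ph = 0 \<and> blk = [(None, Some x)] \<and> s' = (1, 0, x)) \<or>
     (ph = 1 \<and> ((\<exists>C. col n C \<and> b \<le> last C \<and> blk = zip (map Some C) (map Some (rot t C)) \<and>
          s' = (1, last C, nt n t C)) \<or> (blk = [] \<and> s' = (2, 0, 0))))"
    using T s by (simp add: TD_def)
  then show "s' \<in> {1..2} \<times> {0..n} \<times> {0..Suc n} \<and> length blk \<le> Suc n \<and> set blk \<subseteq> pad_alphabet {1..n}"
  proof (elim disjE conjE exE)
    fix C assume a: "ph = 1" "col n C" "b \<le> last C" "blk = zip (map Some C) (map Some (rot t C))"
      "s' = (1, last C, nt n t C)"
    have "set C \<subseteq> {1..n}" using a(2) by (simp add: col_def)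
    then have "set blk \<subseteq> pad_alphabet {1..n}" using a(4) zip_some_pad[of C _ "rot t C"] by simp
    then show ?thesis using a col_len[OF a(2)] col_last[OF a(2)] nt_range[OF a(2), of t] by auto
  qed (use sS s in auto)
qed simp_all

lemma img_pairs: "(\<lambda>(u, v). f u v) ` {(g Cs, h Cs) | Cs. P Cs} = {f (g Cs) (h Cs) | Cs. P Cs}"
  by auto

theorem theorem6p7:
  fixes n :: nat
  shows "biautomatic_structure {1..n} lps_eq (lpsL n)"
  unfolding biautomatic_structure_def
proof (intro conjI ballI)
  show "finite {1..n}" by simp
  show "regular_over {1..n} (lpsL n)" by (rule reg_L)
  show "\<exists>u\<in>lpsL n. lps_eq w u" if "w \<in> lists {1..n}" for w
  proof -
    have ws: "set w \<subseteq> {1..n}" using that by auto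
    show ?thesis using key[OF ws] concat_Rl_in[OF ws] by blast
  qed
  fix a assume a: "a \<in> insert [] ((\<lambda>x. [x]) ` {1..n})"
  let ?G = "pad_alphabet {1..n}"
  have diag: "regular_over ?G {zip (map Some (concat Cs)) (map Some (concat Cs)) | Cs. VF n 0 Cs}"
  proof -
    have "{zip (map Some (concat Cs)) (map Some (concat Cs)) | Cs. VF n 0 Cs} = {Z n (Suc n) Cs | Cs. VF n 0 Cs}"
      using rots_top unfolding Z_def by metis
    then show ?thesis using TD_reg1[of "Suc n" n 0] TD_lang1[of n 0 "Suc n"] by simp
  qed
  have "regular_over ?G ((\<lambda>(u, v). deltaR u v) ` Lright lps_eq (lpsL n) a) \<and>
        regular_over ?G ((\<lambda>(u, v). deltaR u v) ` Lleft lps_eq (lpsL n) a) \<and>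
        regular_over ?G ((\<lambda>(u, v). deltaL u v) ` Lright lps_eq (lpsL n) a) \<and>
        regular_over ?G ((\<lambda>(u, v). deltaL u v) ` Lleft lps_eq (lpsL n) a)"
  proof (cases "a = []")
    case True
    then show ?thesis unfolding True Lnil_eq img_pairs deltaR_same deltaL_same using diag by simp
  next
    case False
    then obtain x where x: "x \<in> {1..n}" "a = [x]" using a by auto
    have r1: "regular_over ?G ((\<lambda>(u, v). deltaR u v) ` Lright lps_eq (lpsL n) a)"
      unfolding x(2) Lright_eq[OF x(1)] img_pairs TR_lang[symmetric] using TR_reg[OF x(1)] .
    have r2: "regular_over ?G ((\<lambda>(u, v). deltaL u v) ` Lright lps_eq (lpsL n) a)"
      unfolding x(2) Lright_eq[OF x(1)] img_pairs TL_lang[symmetric] using TL_reg[OF x(1)] .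
    have e3: "{deltaR (concat Cs) (x # concat (rots n x Cs)) | Cs. VF n 0 Cs} = {W n x x Cs | Cs. VF n 0 Cs}"
      by (simp add: deltaR_len1 length_rots W_def)
    have r3: "regular_over ?G ((\<lambda>(u, v). deltaR u v) ` Lleft lps_eq (lpsL n) a)"
      unfolding x(2) Lleft_eq[OF x(1)] img_pairs e3 TE_lang[symmetric] using TE_reg[OF x(1)] .
    have e4: "{deltaL (concat Cs) (x # concat (rots n x Cs)) | Cs. VF n 0 Cs} = {(None, Some x) # Z n x Cs | Cs. VF n 0 Cs}"
      by (simp add: deltaL_len1 length_rots Z_def)
    have r4: "regular_over ?G ((\<lambda>(u, v). deltaL u v) ` Lleft lps_eq (lpsL n) a)"
      unfolding x(2) Lleft_eq[OF x(1)] img_pairs e4 TD_lang0[symmetric] using TD_reg[OF x(1)] by simp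
    show ?thesis using r1 r2 r3 r4 by blast
  qed
  then show "regular_over ?G ((\<lambda>(u, v). deltaR u v) ` Lright lps_eq (lpsL n) a)"
    "regular_over ?G ((\<lambda>(u, v). deltaR u v) ` Lleft lps_eq (lpsL n) a)"
    "regular_over ?G ((\<lambda>(u, v). deltaL u v) ` Lright lps_eq (lpsL n) a)"
    "regular_over ?G ((\<lambda>(u, v). deltaL u v) ` Lleft lps_eq (lpsL n) a)" by blast+
qed


end
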